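(* Let $(\mathcal{X},d)$ be a finite metric space with at least two points, $\mu\in\mathcal{M}_+(\mathcal{X})$ with $\mu(x)\in\{0,1\}$ for all $x$, $s_x\in(0,1]$ for $x\in\mathcal{X}$, and let $\hat\mu_{s_\mathcal{X}}$ be the Bernoulli-model estimator. Then for every $p\ge1$, $C>0$, $q>1$, $L\in\mathbb{N}$, $$\mathbb{E}\big[\mathrm{KR}_{p,C}(\hat\mu_{s_\mathcal{X}},\mu)\big]\le\mathcal{E}_{p,\mathcal{X}}(C,q,L)^{1/p}\cdot\begin{cases}\big(2\sum_{x\in\mathcal{X}}(1-s_x)\big)^{1/p}, & \text{if } C\le\max\{2h_{q,L}(L),\min_{x\ne x'}d(x,x')\},\\[0.5ex]\big(\sum_{x\in\mathcal{X}}\frac{1-s_x}{s_x}\big)^{1/(2p)}, & \text{otherwise.}\end{cases}$$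
   Context: $\mathrm{KR}_{p,C}(\mu,\nu)=\big(\min_{\pi\in\Pi_\le(\mu,\nu)}\sum_{x,x'}d^p(x,x')\pi(x,x')+C^p(\frac{\mathbb{M}(\mu)+\mathbb{M}(\nu)}2-\mathbb{M}(\pi))\big)^{1/p}$, $\Pi_\le(\mu,\nu)$ the non-negative $\pi$ with row sums $\le\mu$ and column sums $\le\nu$, $\mathbb{M}$ total mass. Bernoulli model: independent $B_x\sim\mathrm{Ber}(s_x)$, $\hat\mu_{s_\mathcal{X}}=\sum_{x\in\mathrm{supp}(\mu)}\frac{B_x}{s_x}\delta_x$. $h_{q,L}(k)=\frac{q^{1-k}-q^{-L}}{q-1}\mathrm{diam}(\mathcal{X})$; $Q_j$ ($j=0..L$) a minimal-cardinality $q^{-j}\mathrm{diam}(\mathcal{X})$-cover of $\mathcal{X}$ by points of $\mathcal{X}$; $A_{q,p,L,\mathcal{X}}(l)=\mathrm{diam}(\mathcal{X})^p2^{p-1}(q^{-Lp}|\mathcal{X}|^{1/2}+(\frac q{q-1})^p\sum_{j=l}^Lq^{p-jp}|Q_j|^{1/2})$. The constant (same as in the Poisson model): $\mathcal{E}_{p,\mathcal{X}}(C,q,L)=\frac{C^p}2$ if $C\le\max\{2h_{q,L}(L),\min_{x\ne x'}d(x,x')\}$; otherwise $(\frac{C^p}2-2^{p-1}h_{q,L}(0)^p)+A_{q,p,L,\mathcal{X}}(1)$ if $C\ge2h_{q,L}(0)$; otherwise $A_{q,p,L,\mathcal{X}}(l)$ for the $l\in\{1,\dots,L\}$ with $2h_{q,L}(l)\le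 C<2h_{q,L}(l-1)$. *)

theory Defs
  imports "HOL-Probability.Probability"
begin

definition finite_metric_space :: "'a set \<Rightarrow> ('a \<Rightarrow> 'a \<Rightarrow> real) \<Rightarrow> bool" where
  "finite_metric_space X d \<longleftrightarrow> finite X \<and>
     (\<forall>x\<in>X. \<forall>y\<in>X. d x y = 0 \<longleftrightarrow> x = y) \<and>
     (\<forall>x\<in>X. \<forall>y\<in>X. d x y = d y x) \<and>
     (\<forall>x\<in>X. \<forall>y\<in>X. \<forall>z\<in>X. d x z \<le> d x y + d y z)"

definition mass :: "'a set \<Rightarrow> ('a \<Rightarrow> real) \<Rightarrow> real" where
  "mass X \<mu> = (\<Sum>x\<in>X. \<mu> x)"

definition subcouplings :: "'a set \<Rightarrow> ('a \<Rightarrow> real) \<Rightarrow> ('a \<Rightarrow> real) \<Rightarrow> ('a \<Rightarrow> 'a \<Rightarrow> real) set" where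
  "subcouplings X \<mu> \<nu> = {\<pi>. (\<forall>x y. \<pi> x y \<ge> 0) \<and> (\<forall>x y. (x \<notin> X \<or> y \<notin> X) \<longrightarrow> \<pi> x y = 0) \<and>
      (\<forall>x\<in>X. (\<Sum>y\<in>X. \<pi> x y) \<le> \<mu> x) \<and> (\<forall>y\<in>X. (\<Sum>x\<in>X. \<pi> x y) \<le> \<nu> y)}"

definition KR :: "'a set \<Rightarrow> ('a \<Rightarrow> 'a \<Rightarrow> real) \<Rightarrow> real \<Rightarrow> real \<Rightarrow> ('a \<Rightarrow> real) \<Rightarrow> ('a \<Rightarrow> real) \<Rightarrow> real" where
  "KR X d p C \<mu> \<nu> =
     (Inf ((\<lambda>\<pi>. (\<Sum>x\<in>X. \<Sum>x'\<in>X. d x x' powr p * \<pi> x x')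
               + C powr p * ((mass X \<mu> + mass X \<nu>) / 2 - (\<Sum>x\<in>X. \<Sum>x'\<in>X. \<pi> x x')))
          ` subcouplings X \<mu> \<nu>)) powr (1 / p)"

definition supp :: "'a set \<Rightarrow> ('a \<Rightarrow> real) \<Rightarrow> 'a set" where
  "supp X \<mu> = {x\<in>X. \<mu> x \<noteq> 0}"

definition bernoulli_family :: "'a set \<Rightarrow> ('a \<Rightarrow> real) \<Rightarrow> ('a \<Rightarrow> real) \<Rightarrow> ('a \<Rightarrow> bool) pmf" where
  "bernoulli_family X \<mu> s = Pi_pmf (supp X \<mu>) False (\<lambda>x. bernoulli_pmf (s x))"

text \<open>The estimator sum_{x in supp mu} B_x / s_x delta_x, as a weight function.\<close>
definition bernoulli_estimator :: "'a set \<Rightarrow> ('a \<Rightarrow> real) \<Rightarrow> ('a \<Rightarrow> real) \<Rightarrow> ('a \<Rightarrow> bool) \<Rightarrow> 'a \<Rightarrow> real" where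
  "bernoulli_estimator X \<mu> s B x = (if x \<in> supp X \<mu> \<and> B x then 1 / s x else 0)"

definition diam :: "'a set \<Rightarrow> ('a \<Rightarrow> 'a \<Rightarrow> real) \<Rightarrow> real" where
  "diam X d = Max {d x y | x y. x \<in> X \<and> y \<in> X}"

definition min_sep :: "'a set \<Rightarrow> ('a \<Rightarrow> 'a \<Rightarrow> real) \<Rightarrow> real" where
  "min_sep X d = Min {d x y | x y. x \<in> X \<and> y \<in> X \<and> x \<noteq> y}"

definition h_fun :: "'a set \<Rightarrow> ('a \<Rightarrow> 'a \<Rightarrow> real) \<Rightarrow> real \<Rightarrow> nat \<Rightarrow> nat \<Rightarrow> real" where
  "h_fun X d q L k = (q powr (1 - real k) - q powr (- real L)) / (q - 1) * diam X d"

definition cover_number :: "'a set \<Rightarrow> ('a \<Rightarrow> 'a \<Rightarrow> real) \<Rightarrow> real \<Rightarrow> nat" where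
  "cover_number X d r = Min {card Q | Q. Q \<subseteq> X \<and> (\<forall>x\<in>X. \<exists>y\<in>Q. d x y \<le> r)}"

definition A_fun :: "'a set \<Rightarrow> ('a \<Rightarrow> 'a \<Rightarrow> real) \<Rightarrow> real \<Rightarrow> real \<Rightarrow> nat \<Rightarrow> nat \<Rightarrow> real" where
  "A_fun X d q p L l = diam X d powr p * 2 powr (p - 1) *
     (q powr (- real L * p) * sqrt (real (card X)) +
      (q / (q - 1)) powr p *
        (\<Sum>j\<in>{l..L}. q powr (p - real j * p) *
            sqrt (real (cover_number X d (q powr (- real j) * diam X d)))))"

definition E_const :: "'a set \<Rightarrow> ('a \<Rightarrow> 'a \<Rightarrow> real) \<Rightarrow> real \<Rightarrow> real \<Rightarrow> real \<Rightarrow> nat \<Rightarrow> real" where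
  "E_const X d p C q L =
     (if C \<le> max (2 * h_fun X d q L L) (min_sep X d) then C powr p / 2
      else if C \<ge> 2 * h_fun X d q L 0 then
        (C powr p / 2 - 2 powr (p - 1) * h_fun X d q L 0 powr p) + A_fun X d q p L 1
      else A_fun X d q p L
             (THE l. l \<in> {1..L} \<and> 2 * h_fun X d q L l \<le> C \<and> C < 2 * h_fun X d q L (l - 1)))"

end

theory Submission
  imports Defs
begin


definition cellsum :: "'a set \<Rightarrow> ('a \<Rightarrow> 'a) \<Rightarrow> ('a \<Rightarrow> real) \<Rightarrow> 'a \<Rightarrow> real" where
  "cellsum X g f c = (\<Sum>x\<in>{x\<in>X. g x = c}. f x)"

definition Tsum :: "'a set \<Rightarrow> ('a \<Rightarrow> 'a) \<Rightarrow> ('a \<Rightarrow> real) \<Rightarrow> real" where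
  "Tsum X g f = (\<Sum>c\<in>g`X. \<bar>cellsum X g f c\<bar>)"

definition Mp :: "'a set \<Rightarrow> ('a \<Rightarrow> 'a \<Rightarrow> real) \<Rightarrow> real" where
  "Mp X \<pi> = (\<Sum>x\<in>X. \<Sum>y\<in>X. \<pi> x y)"

definition Dp :: "'a set \<Rightarrow> ('a \<Rightarrow> 'a \<Rightarrow> real) \<Rightarrow> real \<Rightarrow> ('a \<Rightarrow> 'a \<Rightarrow> real) \<Rightarrow> real" where
  "Dp X d p \<pi> = (\<Sum>x\<in>X. \<Sum>y\<in>X. d x y powr p * \<pi> x y)"

lemma group_sum:
  assumes "finite X"
  shows "(\<Sum>x\<in>X. f x) = (\<Sum>c\<in>g`X. \<Sum>x\<in>{x\<in>X. g x = c}. f x)"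
  using sum.image_gen[OF assms, of f g] by simp

lemma min_eq_div: "(a::real) \<ge> 0 \<Longrightarrow> b \<ge> 0 \<Longrightarrow> a * b / max a b = min a b"
  by (cases "a \<le> b") (auto simp: max_def min_def field_simps)

lemma plan_step:
  fixes X :: "'a set" and a b :: "'a \<Rightarrow> real" and g :: "'a \<Rightarrow> 'a"
  assumes fin: "finite X"
    and pi: "\<pi> \<in> subcouplings X a b"
    and cell: "\<forall>x\<in>X. \<forall>y\<in>X. \<pi> x y \<noteq> 0 \<longrightarrow> g x = g y"
    and mass: "2 * Mp X \<pi> = mass X a + mass X b - T'"
    and dg: "\<forall>x\<in>X. \<forall>y\<in>X. g x = g y \<longrightarrow> d x y \<le> 2 * H"
    and dnn: "\<forall>x\<in>X. \<forall>y\<in>X. 0 \<le> d x y"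
    and H: "H \<ge> 0" and p: "p > 0"
  shows "\<exists>\<pi>'\<in>subcouplings X a b. (\<forall>x\<in>X. \<forall>y\<in>X. \<pi>' x y \<noteq> 0 \<longrightarrow> g x = g y) \<and>
     2 * Mp X \<pi>' = mass X a + mass X b - Tsum X g (\<lambda>x. a x - b x) \<and>
     Dp X d p \<pi>' \<le> Dp X d p \<pi> + 2 powr (p - 1) * H powr p * (T' - Tsum X g (\<lambda>x. a x - b x))"
proof -
  define \<rho> where "\<rho> x = a x - (\<Sum>y\<in>X. \<pi> x y)" for x
  define \<sigma> where "\<sigma> y = b y - (\<Sum>x\<in>X. \<pi> x y)" for y
  define cl where "cl c = {x\<in>X. g x = c}" for c
  define Rp where "Rp c = (\<Sum>x\<in>cl c. \<rho> x)" for c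
  define Rm where "Rm c = (\<Sum>x\<in>cl c. \<sigma> x)" for c
  define m where "m c = max (Rp c) (Rm c)" for c
  define ex where "ex x y = (if x \<in> X \<and> y \<in> X \<and> g x = g y then \<rho> x * \<sigma> y / m (g x) else 0)" for x y
  define \<pi>' where "\<pi>' x y = \<pi> x y + ex x y" for x y
  have pnn: "\<And>x y. \<pi> x y \<ge> 0" and pout: "\<And>x y. x \<notin> X \<or> y \<notin> X \<Longrightarrow> \<pi> x y = 0"
    and prow: "\<And>x. x \<in> X \<Longrightarrow> (\<Sum>y\<in>X. \<pi> x y) \<le> a x"
    and pcol: "\<And>y. y \<in> X \<Longrightarrow> (\<Sum>x\<in>X. \<pi> x y) \<le> b y"
    using pi unfolding subcouplings_def by auto
  have rho: "\<And>x. x \<in> X \<Longrightarrow> \<rho> x \<ge> 0" using prow by (simp add: \<rho>_def)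
  have sig: "\<And>x. x \<in> X \<Longrightarrow> \<sigma> x \<ge> 0" using pcol by (simp add: \<sigma>_def)
  have clX: "cl c \<subseteq> X" for c by (auto simp: cl_def)
  have finc: "finite (cl c)" for c using fin clX finite_subset by blast
  have Rp0: "Rp c \<ge> 0" for c unfolding Rp_def using rho clX by (intro sum_nonneg) auto
  have Rm0: "Rm c \<ge> 0" for c unfolding Rm_def using sig clX by (intro sum_nonneg) auto
  have ex0: "ex x y \<ge> 0" for x y
    unfolding ex_def m_def using rho sig Rp0 Rm0
    by (auto intro!: divide_nonneg_nonneg mult_nonneg_nonneg simp: le_max_iff_disj)
  have exr: "(\<Sum>y\<in>X. ex x y) = \<rho> x * Rm (g x) / m (g x)" if x: "x \<in> X" for x
  proof -
    have "(\<Sum>y\<in>X. ex x y) = (\<Sum>y\<in>cl (g x). \<rho> x * \<sigma> y / m (g x))"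
      unfolding cl_def ex_def using x fin by (subst sum.inter_filter) (auto intro!: sum.cong)
    also have "\<dots> = \<rho> x * Rm (g x) / m (g x)"
      unfolding Rm_def by (simp add: sum_divide_distrib sum_distrib_left)
    finally show ?thesis .
  qed
  have exc: "(\<Sum>x\<in>X. ex x y) = \<sigma> y * Rp (g y) / m (g y)" if y: "y \<in> X" for y
  proof -
    have "(\<Sum>x\<in>X. ex x y) = (\<Sum>x\<in>cl (g y). \<rho> x * \<sigma> y / m (g y))"
      unfolding cl_def ex_def using y fin by (subst sum.inter_filter) (auto intro!: sum.cong)
    also have "\<dots> = \<sigma> y * Rp (g y) / m (g y)"
      unfolding Rp_def by (simp add: sum_divide_distrib sum_distrib_left mult.commute)
    finally show ?thesis .
  qed
  have le1: "u * v / max w v \<le> u" if "u \<ge> 0" "v \<ge> 0" "w \<ge> 0" for u v w :: real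
  proof (cases "max w v = 0")
    case True then show ?thesis using that by simp
  next
    case False
    then have "max w v > 0" using that by (cases "w \<le> v") (auto simp: max_def)
    then show ?thesis using that
      by (simp add: divide_le_eq mult_left_mono)
  qed
  have le1': "u * v / max v w \<le> u" if "u \<ge> 0" "v \<ge> 0" "w \<ge> 0" for u v w :: real
    using le1[OF that] by (simp add: max.commute)
  have sub: "\<pi>' \<in> subcouplings X a b"
  proof -
    have "(\<Sum>y\<in>X. \<pi>' x y) \<le> a x" if x: "x \<in> X" for x
    proof -
      have "(\<Sum>y\<in>X. \<pi>' x y) = (\<Sum>y\<in>X. \<pi> x y) + \<rho> x * Rm (g x) / m (g x)"
        unfolding \<pi>'_def by (simp add: sum.distrib exr x)
      also have "\<rho> x * Rm (g x) / m (g x) \<le> \<rho> x"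
        unfolding m_def using rho[OF x] Rm0 Rp0 by (intro le1)
      finally show ?thesis by (simp add: \<rho>_def)
    qed
    moreover have "(\<Sum>x\<in>X. \<pi>' x y) \<le> b y" if y: "y \<in> X" for y
    proof -
      have "(\<Sum>x\<in>X. \<pi>' x y) = (\<Sum>x\<in>X. \<pi> x y) + \<sigma> y * Rp (g y) / m (g y)"
        unfolding \<pi>'_def by (simp add: sum.distrib exc y)
      also have "\<sigma> y * Rp (g y) / m (g y) \<le> \<sigma> y"
        unfolding m_def using sig[OF y] Rm0 Rp0 by (intro le1')
      finally show ?thesis by (simp add: \<sigma>_def)
    qed
    moreover have "\<pi>' x y \<ge> 0" for x y unfolding \<pi>'_def using pnn ex0 by (simp add: add_nonneg_nonneg)
    moreover have "\<pi>' x y = 0" if "x \<notin> X \<or> y \<notin> X" for x y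
      unfolding \<pi>'_def ex_def using pout[OF that] that by auto
    ultimately show ?thesis unfolding subcouplings_def by auto
  qed
  have cell': "\<forall>x\<in>X. \<forall>y\<in>X. \<pi>' x y \<noteq> 0 \<longrightarrow> g x = g y"
    using cell unfolding \<pi>'_def ex_def by auto
  have Mex: "(\<Sum>x\<in>X. \<Sum>y\<in>X. ex x y) = (\<Sum>c\<in>g`X. min (Rp c) (Rm c))"
  proof -
    have "(\<Sum>x\<in>X. \<Sum>y\<in>X. ex x y) = (\<Sum>x\<in>X. \<rho> x * Rm (g x) / m (g x))"
      by (simp add: exr)
    also have "\<dots> = (\<Sum>c\<in>g`X. \<Sum>x\<in>cl c. \<rho> x * Rm (g x) / m (g x))"
      unfolding cl_def by (rule group_sum[OF fin])
    also have "\<dots> = (\<Sum>c\<in>g`X. Rp c * Rm c / m c)"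
      unfolding Rp_def
      by (intro sum.cong refl) (auto simp: cl_def sum_divide_distrib sum_distrib_right)
    also have "\<dots> = (\<Sum>c\<in>g`X. min (Rp c) (Rm c))"
      unfolding m_def using Rp0 Rm0 by (intro sum.cong refl min_eq_div) auto
    finally show ?thesis .
  qed
  have cellD: "\<And>x y. x\<in>X \<Longrightarrow> y\<in>X \<Longrightarrow> g x \<noteq> g y \<Longrightarrow> \<pi> x y = 0" using cell by blast
  have inner: "(\<Sum>y\<in>X. \<pi> x y) = (\<Sum>y\<in>cl c. \<pi> x y)" if "x \<in> cl c" for x c
  proof (rule sum.mono_neutral_right[OF fin clX])
    show "\<forall>i\<in>X - cl c. \<pi> x i = 0" using that cellD by (auto simp: cl_def) metis+
  qed
  have inner2: "(\<Sum>x\<in>X. \<pi> x y) = (\<Sum>x\<in>cl c. \<pi> x y)" if "y \<in> cl c" for y c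
  proof (rule sum.mono_neutral_right[OF fin clX])
    show "\<forall>i\<in>X - cl c. \<pi> i y = 0" using that cellD by (auto simp: cl_def)
  qed
  have diffc: "Rp c - Rm c = cellsum X g (\<lambda>x. a x - b x) c" for c
  proof -
    have "Rp c = (\<Sum>x\<in>cl c. a x) - (\<Sum>x\<in>cl c. \<Sum>y\<in>cl c. \<pi> x y)"
      unfolding Rp_def \<rho>_def by (simp add: sum_subtractf inner)
    moreover have "Rm c = (\<Sum>x\<in>cl c. b x) - (\<Sum>y\<in>cl c. \<Sum>x\<in>cl c. \<pi> x y)"
      unfolding Rm_def \<sigma>_def by (simp add: sum_subtractf inner2)
    moreover have "(\<Sum>y\<in>cl c. \<Sum>x\<in>cl c. \<pi> x y) = (\<Sum>x\<in>cl c. \<Sum>y\<in>cl c. \<pi> x y)"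
      by (rule sum.swap)
    ultimately show ?thesis unfolding cellsum_def cl_def by (simp add: sum_subtractf)
  qed
  have sumR: "(\<Sum>c\<in>g`X. Rp c + Rm c) = T'"
  proof -
    have "(\<Sum>c\<in>g`X. Rp c + Rm c) = (\<Sum>x\<in>X. \<rho> x) + (\<Sum>x\<in>X. \<sigma> x)"
      unfolding Rp_def Rm_def cl_def by (simp add: sum.distrib group_sum[OF fin, symmetric])
    also have "\<dots> = mass X a - Mp X \<pi> + (mass X b - Mp X \<pi>)"
      unfolding \<rho>_def \<sigma>_def mass_def Mp_def
      using sum.swap[of "\<lambda>x y. \<pi> x y" X X] by (simp add: sum_subtractf)
    finally show ?thesis using mass by simp
  qed
  have summin: "(\<Sum>c\<in>g`X. min (Rp c) (Rm c)) = (T' - Tsum X g (\<lambda>x. a x - b x)) / 2"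
  proof -
    have "(\<Sum>c\<in>g`X. min (Rp c) (Rm c)) = (\<Sum>c\<in>g`X. ((Rp c + Rm c) - \<bar>Rp c - Rm c\<bar>) / 2)"
      by (intro sum.cong refl) (simp add: min_def)
    also have "\<dots> = ((\<Sum>c\<in>g`X. Rp c + Rm c) - Tsum X g (\<lambda>x. a x - b x)) / 2"
      unfolding Tsum_def diffc[symmetric] by (simp add: sum_subtractf flip: sum_divide_distrib)
    finally show ?thesis using sumR by simp
  qed
  have Mnew: "Mp X \<pi>' = Mp X \<pi> + (T' - Tsum X g (\<lambda>x. a x - b x)) / 2"
    unfolding Mp_def \<pi>'_def by (simp add: sum.distrib Mex summin)
  have cost: "Dp X d p \<pi>' \<le> Dp X d p \<pi> + (2 * H) powr p * (\<Sum>x\<in>X. \<Sum>y\<in>X. ex x y)"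
  proof -
    have "Dp X d p \<pi>' = Dp X d p \<pi> + (\<Sum>x\<in>X. \<Sum>y\<in>X. d x y powr p * ex x y)"
      unfolding Dp_def \<pi>'_def by (simp add: sum.distrib distrib_left)
    also have "(\<Sum>x\<in>X. \<Sum>y\<in>X. d x y powr p * ex x y) \<le> (\<Sum>x\<in>X. \<Sum>y\<in>X. (2 * H) powr p * ex x y)"
    proof (intro sum_mono)
      fix x y assume xy: "x \<in> X" "y \<in> X"
      show "d x y powr p * ex x y \<le> (2 * H) powr p * ex x y"
      proof (cases "g x = g y")
        case True
        then have "d x y powr p \<le> (2 * H) powr p"
          using dg dnn xy p by (intro powr_mono2) auto
        then show ?thesis using ex0 by (intro mult_right_mono) auto
      next
        case False then show ?thesis by (simp add: ex_def)
      qed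
    qed
    finally show ?thesis by (simp add: sum_distrib_left)
  qed
  have pw: "(2 * H) powr p * ((T' - Tsum X g (\<lambda>x. a x - b x)) / 2)
      = 2 powr (p - 1) * H powr p * (T' - Tsum X g (\<lambda>x. a x - b x))"
    using H by (simp add: powr_mult powr_diff)
  show ?thesis
    apply (rule bexI[OF _ sub])
    using cell' Mnew mass cost pw Mex summin by (auto simp: algebra_simps)
qed


lemma plan_levels:
  fixes X :: "'a set" and a b :: "'a \<Rightarrow> real" and g :: "nat \<Rightarrow> 'a \<Rightarrow> 'a" and H :: "nat \<Rightarrow> real"
  assumes fin: "finite X"
    and a0: "\<forall>x\<in>X. a x \<ge> 0" and b0: "\<forall>x\<in>X. b x \<ge> 0"
    and dxx: "\<forall>x\<in>X. d x x = 0"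
    and dnn: "\<forall>x\<in>X. \<forall>y\<in>X. 0 \<le> d x y"
    and p: "p > 0"
    and gL: "\<forall>x\<in>X. g (Suc L) x = x"
    and nest: "\<forall>k\<le>L. \<forall>x\<in>X. \<forall>y\<in>X. g (Suc k) x = g (Suc k) y \<longrightarrow> g k x = g k y"
    and dg: "\<forall>k\<le>L. \<forall>x\<in>X. \<forall>y\<in>X. g k x = g k y \<longrightarrow> d x y \<le> 2 * H k"
    and H0: "\<forall>k. H k \<ge> 0"
    and l: "l \<le> Suc L"
  shows "\<exists>\<pi>\<in>subcouplings X a b. Dp X d p \<pi> + C powr p * ((mass X a + mass X b) / 2 - Mp X \<pi>)
     \<le> (\<Sum>j\<in>{l..L}. 2 powr (p - 1) * H j powr p *
          (Tsum X (g (Suc j)) (\<lambda>x. a x - b x) - Tsum X (g j) (\<lambda>x. a x - b x)))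
       + C powr p / 2 * Tsum X (g l) (\<lambda>x. a x - b x)"
proof -
  define T where "T j = Tsum X (g j) (\<lambda>x. a x - b x)" for j
  define w where "w j = 2 powr (p - 1) * H j powr p" for j
  define P where "P k \<longleftrightarrow> (\<exists>\<pi>\<in>subcouplings X a b. (\<forall>x\<in>X. \<forall>y\<in>X. \<pi> x y \<noteq> 0 \<longrightarrow> g k x = g k y) \<and>
     2 * Mp X \<pi> = mass X a + mass X b - T k \<and>
     Dp X d p \<pi> \<le> (\<Sum>j\<in>{k..L}. w j * (T (Suc j) - T j)))" for k
  have "P l"
    using l
  proof (induction rule: inc_induct)
    case base
    define \<pi> where "\<pi> x y = (if x \<in> X \<and> y = x then min (a x) (b x) else 0)" for x y
    have rs: "(\<Sum>y\<in>X. \<pi> x y) = min (a x) (b x)" if "x \<in> X" for x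
      using that fin by (simp add: \<pi>_def)
    have cs: "(\<Sum>x\<in>X. \<pi> x y) = min (a y) (b y)" if "y \<in> X" for y
      using that fin by (simp add: \<pi>_def if_distrib cong: if_cong)
    have sub: "\<pi> \<in> subcouplings X a b"
      unfolding subcouplings_def using rs cs a0 b0 by (auto simp: \<pi>_def)
    have img: "g (Suc L) ` X = X" using gL by (auto simp: image_def)
    have cellc: "cellsum X (g (Suc L)) f c = f c" if "c \<in> X" for c f
    proof -
      have "{x\<in>X. g (Suc L) x = c} = {c}" using that gL by auto
      then show ?thesis by (simp add: cellsum_def)
    qed
    have T: "T (Suc L) = (\<Sum>x\<in>X. \<bar>a x - b x\<bar>)"
      unfolding T_def Tsum_def img by (intro sum.cong refl) (simp add: cellc)
    have M: "Mp X \<pi> = (\<Sum>x\<in>X. min (a x) (b x))"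
      unfolding Mp_def by (simp add: rs)
    have "2 * Mp X \<pi> = mass X a + mass X b - T (Suc L)"
    proof -
      have "2 * Mp X \<pi> = (\<Sum>x\<in>X. a x + b x - \<bar>a x - b x\<bar>)"
        unfolding M sum_distrib_left by (intro sum.cong refl) (simp add: min_def)
      then show ?thesis unfolding T mass_def by (simp add: sum_subtractf sum.distrib)
    qed
    moreover have "Dp X d p \<pi> = 0"
      unfolding Dp_def \<pi>_def using dxx by (intro sum.neutral) (auto simp: if_distrib cong: if_cong)
    moreover have "\<forall>x\<in>X. \<forall>y\<in>X. \<pi> x y \<noteq> 0 \<longrightarrow> g (Suc L) x = g (Suc L) y"
      by (simp add: \<pi>_def)
    ultimately show ?case unfolding P_def using sub by (intro bexI[of _ \<pi>]) auto
  next
    case (step n)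
    then obtain \<pi> where pi: "\<pi> \<in> subcouplings X a b"
      and cell: "\<forall>x\<in>X. \<forall>y\<in>X. \<pi> x y \<noteq> 0 \<longrightarrow> g (Suc n) x = g (Suc n) y"
      and mass: "2 * Mp X \<pi> = mass X a + mass X b - T (Suc n)"
      and cost: "Dp X d p \<pi> \<le> (\<Sum>j\<in>{Suc n..L}. w j * (T (Suc j) - T j))"
      unfolding P_def by blast
    have nL: "n \<le> L" using step by simp
    have cell': "\<forall>x\<in>X. \<forall>y\<in>X. \<pi> x y \<noteq> 0 \<longrightarrow> g n x = g n y"
      using cell nest nL by blast
    obtain \<pi>' where pi': "\<pi>' \<in> subcouplings X a b"
      and c': "\<forall>x\<in>X. \<forall>y\<in>X. \<pi>' x y \<noteq> 0 \<longrightarrow> g n x = g n y"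
      and m': "2 * Mp X \<pi>' = mass X a + mass X b - T n"
      and d': "Dp X d p \<pi>' \<le> Dp X d p \<pi> + w n * (T (Suc n) - T n)"
      using plan_step[OF fin pi cell' mass, of d "H n" p] dg nL dnn H0 p
      unfolding T_def w_def by auto
    have "(\<Sum>j\<in>{n..L}. w j * (T (Suc j) - T j)) = w n * (T (Suc n) - T n) + (\<Sum>j\<in>{Suc n..L}. w j * (T (Suc j) - T j))"
      using nL by (simp add: sum.atLeast_Suc_atMost)
    then show ?case unfolding P_def using pi' c' m' d' cost by (intro bexI[of _ \<pi>']) auto
  qed
  then obtain \<pi> where pi: "\<pi> \<in> subcouplings X a b"
      and mass: "2 * Mp X \<pi> = mass X a + mass X b - T l"
      and cost: "Dp X d p \<pi> \<le> (\<Sum>j\<in>{l..L}. w j * (T (Suc j) - T j))"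
    unfolding P_def by blast
  have E: "C powr p * ((mass X a + mass X b) / 2 - Mp X \<pi>) = C powr p / 2 * T l"
  proof -
    have "(mass X a + mass X b) / 2 - Mp X \<pi> = T l / 2" using mass by (simp add: field_simps; linarith)
    then show ?thesis by simp
  qed
  have "Dp X d p \<pi> + C powr p * ((mass X a + mass X b) / 2 - Mp X \<pi>)
       \<le> (\<Sum>j\<in>{l..L}. w j * (T (Suc j) - T j)) + C powr p / 2 * T l"
    unfolding E using cost by linarith
  then show ?thesis using pi unfolding T_def w_def by (intro bexI[of _ \<pi>])
qed


locale bsetup =
  fixes X :: "'a set" and \<mu> s :: "'a \<Rightarrow> real"
  assumes finX: "finite X" and mu01: "\<forall>x\<in>X. \<mu> x \<in> {0, 1}"
    and s01: "\<forall>x\<in>X. 0 < s x \<and> s x \<le> 1"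
begin

abbreviation "P \<equiv> bernoulli_family X \<mu> s"
abbreviation "S \<equiv> supp X \<mu>"

definition D :: "('a \<Rightarrow> bool) \<Rightarrow> 'a \<Rightarrow> real" where
  "D B x = bernoulli_estimator X \<mu> s B x - \<mu> x"

definition u :: "'a \<Rightarrow> bool \<Rightarrow> real" where
  "u x v = (if v then 1 / s x else 0)"

lemma SX: "S \<subseteq> X" by (auto simp: supp_def)
lemma finS: "finite S" using SX finX finite_subset by blast

lemma spos: "x \<in> S \<Longrightarrow> 0 < s x" using s01 SX by auto
lemma sle1: "x \<in> S \<Longrightarrow> s x \<le> 1" using s01 SX by auto

lemma finP: "finite (set_pmf P)"
proof -
  have "set_pmf P = PiE_dflt S False (set_pmf \<circ> (\<lambda>x. bernoulli_pmf (s x)))"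
    unfolding bernoulli_family_def by (rule set_Pi_pmf[OF finS])
  also have "finite \<dots>" using finS by (intro finite_PiE_dflt) auto
  finally show ?thesis .
qed

lemma intP[simp]: "integrable (measure_pmf P) (f :: _ \<Rightarrow> real)"
  by (rule integrable_measure_pmf_finite[OF finP])

lemma muS: "x \<in> S \<Longrightarrow> \<mu> x = 1" using mu01 by (auto simp: supp_def)
lemma muNS: "x \<in> X \<Longrightarrow> x \<notin> S \<Longrightarrow> \<mu> x = 0" using mu01 by (auto simp: supp_def)

lemma D_S: "x \<in> S \<Longrightarrow> D B x = u x (B x) - 1"
  using muS by (simp add: D_def bernoulli_estimator_def u_def)
lemma D_NS: "x \<in> X \<Longrightarrow> x \<notin> S \<Longrightarrow> D B x = 0"
  using muNS by (simp add: D_def bernoulli_estimator_def)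

lemma E_comp:
  assumes "x \<in> S"
  shows "measure_pmf.expectation P (\<lambda>B. f (B x)) = f True * s x + f False * (1 - s x)"
proof -
  have "measure_pmf.expectation P (\<lambda>B. f (B x)) =
        measure_pmf.expectation (map_pmf (\<lambda>B. B x) P) f" by simp
  also have "map_pmf (\<lambda>B. B x) P = bernoulli_pmf (s x)"
    unfolding bernoulli_family_def
    using Pi_pmf_component[OF finS, of x False "\<lambda>x. bernoulli_pmf (s x)"] assms by simp
  also have "measure_pmf.expectation (bernoulli_pmf (s x)) f = f True * s x + f False * (1 - s x)"
    using spos[OF assms] sle1[OF assms] by (intro integral_bernoulli_pmf) auto
  finally show ?thesis .
qed

lemma E_pair:
  assumes "x \<in> S" "y \<in> S" "x \<noteq> y" "\<And>v. f v \<ge> 0" "\<And>v. h v \<ge> 0"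
  shows "measure_pmf.expectation P (\<lambda>B. f (B x) * h (B y)) =
     (f True * s x + f False * (1 - s x)) * (h True * s y + h False * (1 - s y))"
proof -
  define F where "F z v = (if z = x then f v else if z = y then h v else 1)" for z v
  have prod: "(\<Prod>z\<in>S. F z (B z)) = f (B x) * h (B y)" for B
  proof -
    have "(\<Prod>z\<in>S. F z (B z)) = F x (B x) * (\<Prod>z\<in>S - {x}. F z (B z))"
      using assms finS by (simp add: prod.remove)
    also have "(\<Prod>z\<in>S - {x}. F z (B z)) = F y (B y) * (\<Prod>z\<in>S - {x} - {y}. F z (B z))"
      using assms finS by (intro prod.remove) auto
    also have "(\<Prod>z\<in>S - {x} - {y}. F z (B z)) = 1"
      by (intro prod.neutral) (auto simp: F_def)
    finally show ?thesis using assms by (simp add: F_def)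
  qed
  have "measure_pmf.expectation P (\<lambda>B. f (B x) * h (B y)) =
        measure_pmf.expectation P (\<lambda>B. \<Prod>z\<in>S. F z (B z))" by (simp add: prod)
  also have "\<dots> = (\<Prod>z\<in>S. measure_pmf.expectation (bernoulli_pmf (s z)) (\<lambda>v. F z v))"
    unfolding bernoulli_family_def
    by (rule expectation_prod_Pi_pmf[OF finS])
       (auto simp: F_def assms integrable_measure_pmf_finite)
  also have "\<dots> = (\<Prod>z\<in>S. F z True * s z + F z False * (1 - s z))"
    using spos sle1 by (intro prod.cong refl) (simp add: less_imp_le)
  also have "\<dots> = (F x True * s x + F x False * (1 - s x)) *
         (\<Prod>z\<in>S - {x}. F z True * s z + F z False * (1 - s z))"
    using assms finS by (simp add: prod.remove)
  also have "(\<Prod>z\<in>S - {x}. F z True * s z + F z False * (1 - s z)) = 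
        (F y True * s y + F y False * (1 - s y)) *
         (\<Prod>z\<in>S - {x} - {y}. F z True * s z + F z False * (1 - s z))"
    using assms finS by (intro prod.remove) auto
  also have "(\<Prod>z\<in>S - {x} - {y}. F z True * s z + F z False * (1 - s z)) = 1"
    by (intro prod.neutral) (auto simp: F_def)
  finally show ?thesis using assms by (simp add: F_def)
qed

lemma Eu: "x \<in> S \<Longrightarrow> measure_pmf.expectation P (\<lambda>B. u x (B x)) = 1"
  using E_comp[of x "u x"] spos[of x] by (auto simp: u_def)

lemma Euu: "x \<in> S \<Longrightarrow> y \<in> S \<Longrightarrow> x \<noteq> y \<Longrightarrow>
    measure_pmf.expectation P (\<lambda>B. u x (B x) * u y (B y)) = 1"
  using E_pair[of x y "u x" "u y"] spos[of x] spos[of y] by (auto simp: u_def)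

lemma EDD:
  assumes "x \<in> X" "y \<in> X"
  shows "measure_pmf.expectation P (\<lambda>B. D B x * D B y) =
    (if x = y \<and> x \<in> S then (1 - s x) / s x else 0)"
proof (cases "x \<in> S \<and> y \<in> S")
  case False
  then show ?thesis using assms D_NS by auto
next
  case True
  show ?thesis
  proof (cases "x = y")
    case True
    have "measure_pmf.expectation P (\<lambda>B. D B x * D B y) =
          measure_pmf.expectation P (\<lambda>B. (u x (B x) - 1)^2)"
      using \<open>x\<in>S \<and> y\<in>S\<close> True by (simp add: D_S power2_eq_square)
    also have "\<dots> = (u x True - 1)^2 * s x + (u x False - 1)^2 * (1 - s x)"
      using \<open>x\<in>S \<and> y\<in>S\<close> by (intro E_comp) auto
    also have "\<dots> = (1 - s x) / s x"
      using spos[of x] \<open>x\<in>S \<and> y\<in>S\<close> by (simp add: u_def field_simps power2_eq_square)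
    finally show ?thesis using True \<open>x\<in>S \<and> y\<in>S\<close> by simp
  next
    case False
    have "measure_pmf.expectation P (\<lambda>B. D B x * D B y) =
          measure_pmf.expectation P (\<lambda>B. u x (B x) * u y (B y) - u x (B x) - u y (B y) + 1)"
      using \<open>x\<in>S \<and> y\<in>S\<close> by (simp add: D_S algebra_simps)
    also have "\<dots> = 0"
      using Euu[of x y] Eu[of x] Eu[of y] \<open>x\<in>S \<and> y\<in>S\<close> False by simp
    finally show ?thesis using False by simp
  qed
qed

lemma E_absD: assumes xX: "x \<in> X" shows "measure_pmf.expectation P (\<lambda>B. \<bar>D B x\<bar>) \<le> 2 * (1 - s x)"
proof (cases "x \<in> S")
  case True
  have "measure_pmf.expectation P (\<lambda>B. \<bar>D B x\<bar>) = measure_pmf.expectation P (\<lambda>B. \<bar>u x (B x) - 1\<bar>)"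
    using True by (simp add: D_S)
  also have "\<dots> = \<bar>u x True - 1\<bar> * s x + \<bar>u x False - 1\<bar> * (1 - s x)"
    using True by (intro E_comp) auto
  also have "\<dots> = 2 * (1 - s x)"
    using spos[OF True] sle1[OF True] by (simp add: u_def field_simps)
  finally show ?thesis by simp
next
  case False
  then show ?thesis using s01 D_NS xX by auto
qed

lemma E_abs_sum:
  assumes F: "F \<subseteq> X"
  shows "measure_pmf.expectation P (\<lambda>B. \<bar>\<Sum>x\<in>F. D B x\<bar>) \<le> sqrt (\<Sum>x\<in>F. (1 - s x) / s x)"
proof -
  have finF: "finite F" using F finX finite_subset by blast
  let ?Y = "\<lambda>B. \<bar>\<Sum>x\<in>F. D B x\<bar>"
  have "measure_pmf.variance P ?Y = measure_pmf.expectation P (\<lambda>B. (?Y B)^2) - (measure_pmf.expectation P ?Y)^2"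
    by (rule measure_pmf.variance_eq) auto
  then have sq: "(measure_pmf.expectation P ?Y)^2 \<le> measure_pmf.expectation P (\<lambda>B. (?Y B)^2)"
    using measure_pmf.variance_positive[of P ?Y] by linarith
  have "measure_pmf.expectation P (\<lambda>B. (?Y B)^2) = measure_pmf.expectation P (\<lambda>B. \<Sum>x\<in>F. \<Sum>y\<in>F. D B x * D B y)"
    by (simp add: power2_eq_square sum_product)
  also have "\<dots> = (\<Sum>x\<in>F. \<Sum>y\<in>F. measure_pmf.expectation P (\<lambda>B. D B x * D B y))"
    by (simp add: Bochner_Integration.integral_sum)
  also have "\<dots> = (\<Sum>x\<in>F. \<Sum>y\<in>F. (if x = y \<and> x \<in> S then (1 - s x) / s x else 0))"
    using F by (intro sum.cong refl EDD) auto
  also have "\<dots> = (\<Sum>x\<in>F. (if x \<in> S then (1 - s x) / s x else 0))"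
    using finF by (intro sum.cong refl) (auto simp: if_distrib cong: if_cong)
  also have "\<dots> \<le> (\<Sum>x\<in>F. (1 - s x) / s x)"
    using F s01 by (intro sum_mono) (auto intro!: divide_nonneg_pos)
  finally have "(measure_pmf.expectation P ?Y)^2 \<le> (\<Sum>x\<in>F. (1 - s x) / s x)" using sq by linarith
  moreover have "measure_pmf.expectation P ?Y \<ge> 0" by (intro Bochner_Integration.integral_nonneg) auto
  ultimately show ?thesis using real_le_rsqrt by blast
qed

end


context bsetup begin

lemma E_Tsum:
  assumes gX: "\<forall>x\<in>X. g x \<in> X"
  shows "measure_pmf.expectation P (\<lambda>B. Tsum X g (D B))
     \<le> sqrt (card (g ` X)) * sqrt (\<Sum>x\<in>X. (1 - s x) / s x)"
proof -
  define V where "V c = (\<Sum>x\<in>{x\<in>X. g x = c}. (1 - s x) / s x)" for c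
  have "measure_pmf.expectation P (\<lambda>B. Tsum X g (D B)) =
      (\<Sum>c\<in>g`X. measure_pmf.expectation P (\<lambda>B. \<bar>\<Sum>x\<in>{x\<in>X. g x = c}. D B x\<bar>))"
    unfolding Tsum_def cellsum_def by (simp add: Bochner_Integration.integral_sum)
  also have "\<dots> \<le> (\<Sum>c\<in>g`X. sqrt (V c))"
    unfolding V_def by (intro sum_mono E_abs_sum) auto
  also have "\<dots> \<le> sqrt (card (g ` X)) * sqrt (\<Sum>c\<in>g`X. V c)"
  proof -
    have "(\<Sum>c\<in>g`X. 1 * sqrt (V c))^2 \<le> (\<Sum>c\<in>g`X. 1^2) * (\<Sum>c\<in>g`X. (sqrt (V c))^2)"
      by (rule Cauchy_Schwarz_ineq_sum)
    also have "(\<Sum>c\<in>g`X. (sqrt (V c))^2) = (\<Sum>c\<in>g`X. V c)"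
      unfolding V_def using s01 by (intro sum.cong refl real_sqrt_pow2 sum_nonneg)
        (auto intro!: divide_nonneg_pos)
    finally have "(\<Sum>c\<in>g`X. sqrt (V c))^2 \<le> card (g ` X) * (\<Sum>c\<in>g`X. V c)" by simp
    then have "(\<Sum>c\<in>g`X. sqrt (V c)) \<le> sqrt (card (g ` X) * (\<Sum>c\<in>g`X. V c))"
      using real_le_rsqrt by blast
    then show ?thesis by (simp add: real_sqrt_mult)
  qed
  also have "(\<Sum>c\<in>g`X. V c) = (\<Sum>x\<in>X. (1 - s x) / s x)"
    unfolding V_def by (rule group_sum[OF finX, symmetric])
  finally show ?thesis .
qed

end


context bsetup begin

lemma E_root:
  fixes G :: "('a \<Rightarrow> bool) \<Rightarrow> real"
  assumes G0: "\<And>B. G B \<ge> 0" and EG: "measure_pmf.expectation P G \<le> K"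
    and r: "0 < r" "r \<le> 1"
  shows "measure_pmf.expectation P (\<lambda>B. G B powr r) \<le> K powr r"
proof -
  have E0: "measure_pmf.expectation P G \<ge> 0" using G0 by (intro Bochner_Integration.integral_nonneg) auto
  show ?thesis
  proof (cases "K > 0")
    case True
    have tan: "G B powr r \<le> K powr r + r * K powr (r - 1) * (G B - K)" for B
    proof (cases "G B > 0 \<and> r < 1")
      case True': True
      have "G B powr r * K powr (1 - r) \<le> r * G B + (1 - r) * K"
        using Youngs_inequality_0[of r "1 - r" "G B" K] True' \<open>K > 0\<close> r by auto
      then have "G B powr r * K powr (1 - r) * K powr (r - 1) \<le> (r * G B + (1 - r) * K) * K powr (r - 1)"
        by (intro mult_right_mono) auto
      moreover have "K powr (1 - r) * K powr (r - 1) = 1"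
        using \<open>K > 0\<close> by (simp add: powr_add[symmetric])
      moreover have "(r * G B + (1 - r) * K) * K powr (r - 1) = K powr r + r * K powr (r - 1) * (G B - K)"
      proof -
        have "K * K powr (r - 1) = K powr r" using powr_mult_base[of K "r - 1"] \<open>K > 0\<close>
          by simp
        then show ?thesis by (simp add: algebra_simps)
      qed
      ultimately show ?thesis by (simp add: mult.assoc)
    next
      case False
      have "G B = 0 \<or> r = 1" using G0[of B] r False by auto
      then consider "G B = 0" | "r = 1" by blast
      then show ?thesis
      proof cases
        case 1
        have "r * K powr (r - 1) * K \<le> K powr r"
        proof -
          have "K powr (r - 1) * K = K powr r" using powr_mult_base[of K "r - 1"] \<open>K > 0\<close>
            by (simp add: mult.commute)
          moreover have "r * K powr r \<le> K powr r"
            using r by (intro mult_left_le_one_le) auto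
          ultimately show ?thesis by (simp add: mult.assoc)
        qed
        then show ?thesis using 1 r by (simp add: algebra_simps)
      next
        case 2
        then show ?thesis using G0[of B] \<open>K > 0\<close> by simp
      qed
    qed
    have "measure_pmf.expectation P (\<lambda>B. G B powr r) \<le>
        measure_pmf.expectation P (\<lambda>B. K powr r + r * K powr (r - 1) * (G B - K))"
      by (intro Bochner_Integration.integral_mono tan) auto
    also have "\<dots> = K powr r + r * K powr (r - 1) * (measure_pmf.expectation P G - K)"
      by simp
    also have "\<dots> \<le> K powr r"
    proof -
      have "r * K powr (r - 1) * (measure_pmf.expectation P G - K) \<le> 0"
        using EG r True by (intro mult_nonneg_nonpos) auto
      then show ?thesis by simp
    qed
    finally show ?thesis .
  next
    case False
    then have "measure_pmf.expectation P G = 0" using E0 EG by simp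
    then have "AE B in measure_pmf P. G B = 0"
      using integral_nonneg_eq_0_iff_AE[of "measure_pmf P" G] G0 by auto
    then have "AE B in measure_pmf P. G B powr r = 0" by eventually_elim simp
    then have "measure_pmf.expectation P (\<lambda>B. G B powr r) = measure_pmf.expectation P (\<lambda>B. 0)"
      by (intro integral_cong_AE) auto
    then show ?thesis by simp
  qed
qed

end


lemma KR_le:
  assumes pi: "\<pi> \<in> subcouplings X a b" and fin: "finite X"
    and dnn: "\<forall>x\<in>X. \<forall>y\<in>X. 0 \<le> d x y" and C: "C \<ge> 0" and p: "p > 0"
    and c: "Dp X d p \<pi> + C powr p * ((mass X a + mass X b) / 2 - Mp X \<pi>) \<le> c"
  shows "KR X d p C a b \<le> c powr (1 / p)"
proof -
  define cost where "cost \<sigma> = (\<Sum>x\<in>X. \<Sum>x'\<in>X. d x x' powr p * \<sigma> x x')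
               + C powr p * ((mass X a + mass X b) / 2 - (\<Sum>x\<in>X. \<Sum>x'\<in>X. \<sigma> x x'))" for \<sigma>
  have c0: "cost \<sigma> \<ge> 0" if s: "\<sigma> \<in> subcouplings X a b" for \<sigma>
  proof -
    have nn: "\<And>x y. \<sigma> x y \<ge> 0" and row: "\<And>x. x\<in>X \<Longrightarrow> (\<Sum>y\<in>X. \<sigma> x y) \<le> a x"
      and col: "\<And>y. y\<in>X \<Longrightarrow> (\<Sum>x\<in>X. \<sigma> x y) \<le> b y"
      using s unfolding subcouplings_def by auto
    have "(\<Sum>x\<in>X. \<Sum>y\<in>X. \<sigma> x y) \<le> mass X a" unfolding mass_def by (intro sum_mono row)
    moreover have "(\<Sum>x\<in>X. \<Sum>y\<in>X. \<sigma> x y) \<le> mass X b"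
    proof -
      have "(\<Sum>x\<in>X. \<Sum>y\<in>X. \<sigma> x y) = (\<Sum>y\<in>X. \<Sum>x\<in>X. \<sigma> x y)" by (rule sum.swap)
      also have "\<dots> \<le> mass X b" unfolding mass_def by (intro sum_mono col)
      finally show ?thesis .
    qed
    ultimately have "(mass X a + mass X b) / 2 - (\<Sum>x\<in>X. \<Sum>y\<in>X. \<sigma> x y) \<ge> 0" by (simp add: field_simps)
    moreover have "(\<Sum>x\<in>X. \<Sum>x'\<in>X. d x x' powr p * \<sigma> x x') \<ge> 0"
      using nn by (intro sum_nonneg mult_nonneg_nonneg) auto
    ultimately show ?thesis unfolding cost_def by (simp add: add_nonneg_nonneg)
  qed
  have bdd: "bdd_below (cost ` subcouplings X a b)" using c0 by (intro bdd_belowI[of _ 0]) auto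
  have "Inf (cost ` subcouplings X a b) \<le> cost \<pi>" using pi bdd by (intro cInf_lower) auto
  also have "cost \<pi> \<le> c" using c unfolding cost_def Dp_def Mp_def .
  finally have le: "Inf (cost ` subcouplings X a b) \<le> c" .
  moreover have "Inf (cost ` subcouplings X a b) \<ge> 0" using pi c0 by (intro cInf_greatest) auto
  ultimately have "Inf (cost ` subcouplings X a b) powr (1 / p) \<le> c powr (1 / p)"
    using p le by (intro powr_mono2) auto
  then show ?thesis unfolding KR_def cost_def .
qed


fun Gi :: "(nat \<Rightarrow> 'a \<Rightarrow> 'a) \<Rightarrow> nat \<Rightarrow> nat \<Rightarrow> 'a \<Rightarrow> 'a" where
  "Gi nr L 0 x = x"
| "Gi nr L (Suc m) x = nr (L - m) (Gi nr L m x)"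

lemma fms_facts:
  assumes "finite_metric_space X d"
  shows "finite X" "\<forall>x\<in>X. d x x = 0" "\<forall>x\<in>X. \<forall>y\<in>X. d x y = d y x"
    "\<forall>x\<in>X. \<forall>y\<in>X. \<forall>z\<in>X. d x z \<le> d x y + d y z" "\<forall>x\<in>X. \<forall>y\<in>X. 0 \<le> d x y"
proof -
  show "finite X" "\<forall>x\<in>X. d x x = 0" "\<forall>x\<in>X. \<forall>y\<in>X. d x y = d y x"
    "\<forall>x\<in>X. \<forall>y\<in>X. \<forall>z\<in>X. d x z \<le> d x y + d y z"
    using assms unfolding finite_metric_space_def by blast+
  show "\<forall>x\<in>X. \<forall>y\<in>X. 0 \<le> d x y"
  proof (intro ballI)
    fix x y assume "x \<in> X" "y \<in> X"
    then have "d x x \<le> d x y + d y x" "d x x = 0" "d y x = d x y"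
      using assms unfolding finite_metric_space_def by blast+
    then show "0 \<le> d x y" by linarith
  qed
qed

lemma diam_ge:
  assumes "finite X" "x \<in> X" "y \<in> X"
  shows "d x y \<le> diam X d"
proof -
  have "{d x y | x y. x \<in> X \<and> y \<in> X} = (\<lambda>(x,y). d x y) ` (X \<times> X)" by auto
  then have "finite {d x y | x y. x \<in> X \<and> y \<in> X}" using assms by simp
  then show ?thesis unfolding diam_def using assms by (intro Max_ge) auto
qed

lemma cover_fin:
  assumes "finite X"
  shows "finite {card Q | Q. Q \<subseteq> X \<and> (\<forall>x\<in>X. \<exists>y\<in>Q. d x y \<le> r)}"
proof -
  have "{card Q | Q. Q \<subseteq> X \<and> (\<forall>x\<in>X. \<exists>y\<in>Q. d x y \<le> r)} \<subseteq> card ` Pow X" by auto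
  then show ?thesis using assms finite_subset by blast
qed

lemma cover_exists:
  assumes "finite X" "\<forall>x\<in>X. d x x = 0" "r \<ge> 0"
  shows "\<exists>Q. Q \<subseteq> X \<and> (\<forall>x\<in>X. \<exists>y\<in>Q. d x y \<le> r) \<and> card Q = cover_number X d r"
proof -
  let ?A = "{card Q | Q. Q \<subseteq> X \<and> (\<forall>x\<in>X. \<exists>y\<in>Q. d x y \<le> r)}"
  have "\<forall>x\<in>X. \<exists>y\<in>X. d x y \<le> r"
  proof
    fix x assume "x \<in> X"
    then have "d x x \<le> r" using assms by simp
    then show "\<exists>y\<in>X. d x y \<le> r" using \<open>x \<in> X\<close> by blast
  qed
  then have "X \<subseteq> X \<and> (\<forall>x\<in>X. \<exists>y\<in>X. d x y \<le> r)" by auto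
  then have "card X \<in> ?A" by blast
  then have "Min ?A \<in> ?A" using cover_fin[OF assms(1)] by (intro Min_in) auto
  then show ?thesis unfolding cover_number_def by auto
qed

lemma cover_le:
  assumes "finite X" "Q \<subseteq> X" "\<forall>x\<in>X. \<exists>y\<in>Q. d x y \<le> r"
  shows "cover_number X d r \<le> card Q"
  unfolding cover_number_def using cover_fin[OF assms(1)] assms by (intro Min_le) auto

lemma h_rec:
  assumes q: "q > 1" and n: "n \<le> L"
  shows "h_fun X d q L n = q powr (- real n) * diam X d + (if Suc n \<le> L then h_fun X d q L (Suc n) else 0)"
proof -
  have e1: "q powr (1 - real n) = q * q powr (- real n)"
    using q by (simp add: powr_diff powr_minus divide_inverse)
  have e2: "q powr (1 - real (Suc n)) = q powr (- real n)"
    by simp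
  show ?thesis
  proof (cases "Suc n \<le> L")
    case True
    have "h_fun X d q L n - h_fun X d q L (Suc n) = (q powr (1 - real n) - q powr (1 - real (Suc n))) / (q - 1) * diam X d"
      unfolding h_fun_def by (simp only: left_diff_distrib[symmetric] diff_divide_distrib[symmetric]) simp
    also have "\<dots> = q powr (- real n) * diam X d"
      unfolding e1 e2 using q by (simp add: field_simps)
    finally show ?thesis using True by simp
  next
    case False
    then have "n = L" using n by simp
    then show ?thesis unfolding h_fun_def e1 using q by (simp add: field_simps)
  qed
qed

lemma h_nonneg:
  assumes q: "q > 1" and k: "k \<le> L" and D: "diam X d \<ge> 0"
  shows "h_fun X d q L k \<ge> 0"
proof -
  have "q powr (- real L) \<le> q powr (1 - real k)" using q k by (intro powr_mono) auto
  then show ?thesis unfolding h_fun_def using q D by (intro mult_nonneg_nonneg divide_nonneg_pos) auto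
qed

lemma h_anti:
  assumes q: "q > 1" and k: "k1 \<le> k2" and D: "diam X d \<ge> 0"
  shows "h_fun X d q L k2 \<le> h_fun X d q L k1"
proof -
  have "q powr (1 - real k2) \<le> q powr (1 - real k1)" using q k by (intro powr_mono) auto
  then show ?thesis unfolding h_fun_def using q D
    by (intro mult_right_mono divide_right_mono) auto
qed

lemma h_upper:
  assumes q: "q > 1" and D: "diam X d \<ge> 0"
  shows "h_fun X d q L k \<le> diam X d * (q / (q - 1)) * q powr (- real k)"
proof -
  have "q powr (1 - real k) - q powr (- real L) \<le> q * q powr (- real k)"
    using q by (simp add: powr_diff powr_minus divide_inverse)
  then have "(q powr (1 - real k) - q powr (- real L)) / (q - 1) \<le> q * q powr (- real k) / (q - 1)"
    using q by (intro divide_right_mono) auto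
  then have "(q powr (1 - real k) - q powr (- real L)) / (q - 1) * diam X d \<le> q * q powr (- real k) / (q - 1) * diam X d"
    using D by (intro mult_right_mono) auto
  then show ?thesis unfolding h_fun_def by (simp add: field_simps)
qed

lemma h_pow_bound:
  assumes q: "q > 1" and D: "diam X d \<ge> 0" and k: "k \<le> L" and p: "p > 0"
  shows "h_fun X d q L k powr p \<le> diam X d powr p * (q / (q - 1)) powr p * q powr (p - real (Suc k) * p)"
proof -
  have "h_fun X d q L k powr p \<le> (diam X d * (q / (q - 1)) * q powr (- real k)) powr p"
    using h_upper[OF q D] h_nonneg[OF q k D] p by (intro powr_mono2) auto
  also have "\<dots> = (diam X d * (q / (q - 1))) powr p * (q powr (- real k)) powr p"
    using q D by (intro powr_mult)
  also have "(diam X d * (q / (q - 1))) powr p = diam X d powr p * (q / (q - 1)) powr p"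
    using q D by (intro powr_mult)
  also have "(q powr (- real k)) powr p = q powr (p - real (Suc k) * p)"
    by (simp add: powr_powr algebra_simps)
  finally show ?thesis .
qed


lemma tree_maps:
  assumes fms: "finite_metric_space X d" and q: "q > 1" and ne: "X \<noteq> {}"
  shows "\<exists>g :: nat \<Rightarrow> 'a \<Rightarrow> 'a. (\<forall>x\<in>X. g (Suc L) x = x)
    \<and> (\<forall>k\<le>L. \<forall>x\<in>X. \<forall>y\<in>X. g (Suc k) x = g (Suc k) y \<longrightarrow> g k x = g k y)
    \<and> (\<forall>k\<le>L. \<forall>x\<in>X. \<forall>y\<in>X. g k x = g k y \<longrightarrow> d x y \<le> 2 * h_fun X d q L k)
    \<and> (\<forall>k. \<forall>x\<in>X. g k x \<in> X)
    \<and> (\<forall>k\<le>L. card (g k ` X) \<le> cover_number X d (q powr (- real k) * diam X d))"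
proof -
  note F = fms_facts[OF fms]
  have fin: "finite X" by (rule F(1))
  have tri: "\<And>x y z. x\<in>X \<Longrightarrow> y\<in>X \<Longrightarrow> z\<in>X \<Longrightarrow> d x z \<le> d x y + d y z"
    using F(4) by blast
  have sym: "\<And>x y. x\<in>X \<Longrightarrow> y\<in>X \<Longrightarrow> d x y = d y x"
    using F(3) by blast
  have D0: "diam X d \<ge> 0"
  proof -
    obtain x where "x \<in> X" using ne by blast
    then show ?thesis using diam_ge[OF fin, of x x d] F(2) by simp
  qed
  define r where "r k = q powr (- real k) * diam X d" for k
  have r0: "r k \<ge> 0" for k unfolding r_def using D0 by simp
  define Q where "Q k = (SOME Q. Q \<subseteq> X \<and> (\<forall>x\<in>X. \<exists>y\<in>Q. d x y \<le> r k) \<and> card Q = cover_number X d (r k))" for k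
  have Q: "Q k \<subseteq> X \<and> (\<forall>x\<in>X. \<exists>y\<in>Q k. d x y \<le> r k) \<and> card (Q k) = cover_number X d (r k)" for k
  proof -
    have ex: "\<exists>Q. Q \<subseteq> X \<and> (\<forall>x\<in>X. \<exists>y\<in>Q. d x y \<le> r k) \<and> card Q = cover_number X d (r k)"
      by (rule cover_exists[of X d "r k", OF fin F(2) r0[of k]])
    show ?thesis unfolding Q_def by (rule someI_ex[OF ex])
  qed
  have QX: "Q k \<subseteq> X" for k using Q[of k] by (rule conjunct1)
  have Qcov: "\<forall>x\<in>X. \<exists>y\<in>Q k. d x y \<le> r k" for k using Q[of k] by (metis conjunct1 conjunct2)
  have Qcard: "card (Q k) = cover_number X d (r k)" for k using Q[of k] by (metis conjunct2)
  define nr where "nr k x = (SOME y. y \<in> Q k \<and> d x y \<le> r k)" for k x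
  have nr: "nr k x \<in> Q k \<and> d x (nr k x) \<le> r k" if xX: "x \<in> X" for k x
  proof -
    obtain y where "y \<in> Q k" "d x y \<le> r k" using bspec[OF Qcov[of k] xX] by blast
    then have ex: "\<exists>y. y \<in> Q k \<and> d x y \<le> r k" by blast
    show ?thesis unfolding nr_def by (rule someI_ex[OF ex])
  qed
  define g where "g k = Gi nr L (Suc L - k)" for k
  have gSL: "g (Suc L) x = x" for x by (simp add: g_def)
  have grec: "g k x = nr k (g (Suc k) x)" if "k \<le> L" for k x
  proof -
    have "Suc L - k = Suc (L - k)" using that by simp
    moreover have "L - (L - k) = k" using that by simp
    moreover have "Suc L - Suc k = L - k" by simp
    ultimately show ?thesis unfolding g_def by simp
  qed
  have gbig: "g k x = x" if "k > L" for k x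
  proof -
    have "Suc L - k = 0" using that by simp
    then show ?thesis by (simp add: g_def)
  qed
  have GiX: "Gi nr L m x \<in> X" if "x \<in> X" for m x
    using that
  proof (induction m)
    case (Suc m)
    then have "Gi nr L m x \<in> X" by simp
    then show ?case using nr[of "Gi nr L m x" "L - m"] QX[of "L - m"] by auto
  qed simp
  have gX: "g k x \<in> X" if "x \<in> X" for k x
    unfolding g_def using GiX that by blast
  have Gid: "d x (Gi nr L m x) \<le> (if m = 0 then 0 else h_fun X d q L (Suc L - m))"
    if "x \<in> X" "m \<le> Suc L" for m x
    using that(2)
  proof (induction m)
    case 0 then show ?case using F(2) that(1) by simp
  next
    case (Suc m)
    let ?y = "Gi nr L m x"
    have y: "?y \<in> X" using GiX that(1) by blast
    have IH: "d x ?y \<le> (if m = 0 then 0 else h_fun X d q L (Suc L - m))" using Suc by simp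
    have nX: "nr (L - m) ?y \<in> X" using nr[OF y, of "L - m"] QX[of "L - m"] by blast
    have "d x (Gi nr L (Suc m) x) \<le> d x ?y + d ?y (nr (L - m) ?y)"
      using tri[OF that(1) y nX] by simp
    also have "\<dots> \<le> (if m = 0 then 0 else h_fun X d q L (Suc L - m)) + r (L - m)"
      using IH nr[OF y, of "L - m"] by simp
    also have "\<dots> = h_fun X d q L (L - m)"
    proof -
      have hr: "h_fun X d q L (L - m) = r (L - m) + (if Suc (L - m) \<le> L then h_fun X d q L (Suc (L - m)) else 0)"
        using h_rec[OF q, of "L - m" L X d] unfolding r_def by simp
      show ?thesis
      proof (cases "m = 0")
        case True then show ?thesis using hr by simp
      next
        case False
        then have "Suc (L - m) \<le> L" "Suc L - m = Suc (L - m)" using Suc.prems by auto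
        then show ?thesis using hr False by simp
      qed
    qed
    finally show ?case using Suc.prems by simp
  qed
  have gd: "d x (g k x) \<le> h_fun X d q L k" if "x \<in> X" "k \<le> L" for x k
  proof -
    have "Suc L - (Suc L - k) = k" using that by simp
    then show ?thesis using Gid[OF that(1), of "Suc L - k"] that(2) unfolding g_def by simp
  qed
  have grec: "g k x = nr k (g (Suc k) x)" if "k \<le> L" for k x
  proof -
    have "Suc L - k = Suc (L - k)" using that by simp
    moreover have "L - (L - k) = k" using that by simp
    moreover have "Suc L - Suc k = L - k" by simp
    ultimately show ?thesis unfolding g_def by simp
  qed
  have nest: "\<forall>k\<le>L. \<forall>x\<in>X. \<forall>y\<in>X. g (Suc k) x = g (Suc k) y \<longrightarrow> g k x = g k y"
  proof (intro allI impI ballI)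
    fix k x y assume "k \<le> L" "x \<in> X" "y \<in> X" "g (Suc k) x = g (Suc k) y"
    then show "g k x = g k y" using grec[of k x] grec[of k y] by simp
  qed
  have dg: "\<forall>k\<le>L. \<forall>x\<in>X. \<forall>y\<in>X. g k x = g k y \<longrightarrow> d x y \<le> 2 * h_fun X d q L k"
  proof (intro allI impI ballI)
    fix k x y assume k: "k \<le> L" and x: "x \<in> X" and y: "y \<in> X" and e: "g k x = g k y"
    have "d x y \<le> d x (g k x) + d (g k x) y" using tri[OF x gX[OF x] y] .
    also have "d (g k x) y = d y (g k y)" using sym[OF gX[OF y, of k] y] e by simp
    finally show "d x y \<le> 2 * h_fun X d q L k" using gd[OF x k] gd[OF y k] by simp
  qed
  have card: "\<forall>k\<le>L. card (g k ` X) \<le> cover_number X d (q powr (- real k) * diam X d)"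
  proof (intro allI impI)
    fix k assume k: "k \<le> L"
    have "g k ` X \<subseteq> Q k"
    proof
      fix z assume "z \<in> g k ` X"
      then obtain x where x: "x \<in> X" "z = g k x" by blast
      have "nr k (g (Suc k) x) \<in> Q k" using nr[OF gX[OF x(1)]] by blast
      then show "z \<in> Q k" using x grec[OF k] by simp
    qed
    moreover have "finite (Q k)" using QX[of k] fin finite_subset by blast
    ultimately have "card (g k ` X) \<le> card (Q k)" by (rule card_mono[rotated])
    then show "card (g k ` X) \<le> cover_number X d (q powr (- real k) * diam X d)"
      using Qcard[of k] unfolding r_def by simp
  qed
  have gX': "\<forall>k. \<forall>x\<in>X. g k x \<in> X" using gX by blast
  have gSL': "\<forall>x\<in>X. g (Suc L) x = x" by (simp add: gSL)
  show ?thesis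
    by (intro exI[of _ g] conjI gSL' nest dg gX' card)
qed


lemma Tsum_id:
  assumes "finite X" "\<forall>x\<in>X. g x = x"
  shows "Tsum X g f = (\<Sum>x\<in>X. \<bar>f x\<bar>)" "g ` X = X"
proof -
  show img: "g ` X = X" using assms(2) by force
  have "cellsum X g f c = f c" if "c \<in> X" for c
  proof -
    have "{x\<in>X. g x = c} = {c}" using that assms(2) by auto
    then show ?thesis by (simp add: cellsum_def)
  qed
  then show "Tsum X g f = (\<Sum>x\<in>X. \<bar>f x\<bar>)"
    unfolding Tsum_def img by (intro sum.cong refl) simp
qed

lemma compare_sum:
  fixes Nc :: "nat \<Rightarrow> nat"
  assumes q: "q > 1" and D0: "diam X d \<ge> 0" and p: "p > 0" and l: "l \<le> L"
    and NcL: "Nc (Suc L) \<le> card X"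
    and Ncj: "\<forall>j. Suc j \<le> L \<longrightarrow> Nc (Suc j) \<le> cover_number X d (q powr (- real (Suc j)) * diam X d)"
  shows "(\<Sum>j\<in>{l..L}. 2 powr (p - 1) * h_fun X d q L j powr p * sqrt (Nc (Suc j)))
    \<le> diam X d powr p * 2 powr (p - 1) * (q powr (- real L * p) * sqrt (card X) +
        (q / (q - 1)) powr p * (\<Sum>j\<in>{Suc l..L}. q powr (p - real j * p) *
            sqrt (cover_number X d (q powr (- real j) * diam X d))))"
proof -
  define f where "f j = 2 powr (p - 1) * h_fun X d q L j powr p * sqrt (Nc (Suc j))" for j
  define N where "N j = real (cover_number X d (q powr (- real j) * diam X d))" for j
  define K where "K = diam X d powr p * 2 powr (p - 1) * (q / (q - 1)) powr p"
  have s1: "(\<Sum>j\<in>{l..L}. f j) = (\<Sum>j\<in>{l..<L}. f j) + f L"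
    using l by (simp add: atLeastLessThanSuc_atLeastAtMost[symmetric] sum.atLeastLessThan_Suc)
  have s2: "f L \<le> diam X d powr p * 2 powr (p - 1) * (q powr (- real L * p) * sqrt (card X))"
  proof -
    have hL: "h_fun X d q L L = q powr (- real L) * diam X d"
      using h_rec[OF q, of L L X d] by simp
    have "h_fun X d q L L powr p = q powr (- real L * p) * diam X d powr p"
      unfolding hL using q D0 by (simp add: powr_mult powr_powr)
    moreover have "sqrt (Nc (Suc L)) \<le> sqrt (card X)" using NcL by simp
    ultimately show ?thesis unfolding f_def
      by (simp add: mult_left_mono mult.assoc mult.left_commute)
  qed
  have s3: "(\<Sum>j\<in>{l..<L}. f j) \<le> (\<Sum>j\<in>{l..<L}. K * (q powr (p - real (Suc j) * p) * sqrt (N (Suc j))))"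
  proof (intro sum_mono)
    fix j assume j: "j \<in> {l..<L}"
    have hb: "h_fun X d q L j powr p \<le> diam X d powr p * (q / (q - 1)) powr p * q powr (p - real (Suc j) * p)"
      using h_pow_bound[OF q D0 _ p, of j L] j by simp
    have nb: "sqrt (Nc (Suc j)) \<le> sqrt (N (Suc j))"
      using Ncj j unfolding N_def by simp
    have "f j \<le> 2 powr (p - 1) * (diam X d powr p * (q / (q - 1)) powr p * q powr (p - real (Suc j) * p)) * sqrt (N (Suc j))"
      unfolding f_def using hb nb by (intro mult_mono) auto
    then show "f j \<le> K * (q powr (p - real (Suc j) * p) * sqrt (N (Suc j)))"
      unfolding K_def by (simp add: mult_ac)
  qed
  have s4: "(\<Sum>j\<in>{l..<L}. K * (q powr (p - real (Suc j) * p) * sqrt (N (Suc j))))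
      = K * (\<Sum>j\<in>{Suc l..L}. q powr (p - real j * p) * sqrt (N j))"
  proof -
    have "(\<Sum>j\<in>{Suc l..L}. q powr (p - real j * p) * sqrt (N j)) = (\<Sum>j\<in>{Suc l..<Suc L}. q powr (p - real j * p) * sqrt (N j))"
      by (simp add: atLeastLessThanSuc_atLeastAtMost)
    also have "\<dots> = (\<Sum>j\<in>{l..<L}. q powr (p - real (Suc j) * p) * sqrt (N (Suc j)))"
      by (rule sum.shift_bounds_Suc_ivl)
    finally show ?thesis by (simp add: sum_distrib_left)
  qed
  have R: "diam X d powr p * 2 powr (p - 1) * (q powr (- real L * p) * sqrt (card X) +
        (q / (q - 1)) powr p * (\<Sum>j\<in>{Suc l..L}. q powr (p - real j * p) *
            sqrt (cover_number X d (q powr (- real j) * diam X d))))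
     = diam X d powr p * 2 powr (p - 1) * (q powr (- real L * p) * sqrt (card X)) +
       K * (\<Sum>j\<in>{Suc l..L}. q powr (p - real j * p) * sqrt (N j))"
    unfolding K_def N_def by (simp only: distrib_left mult.assoc)
  have L: "(\<Sum>j\<in>{l..L}. 2 powr (p - 1) * h_fun X d q L j powr p * sqrt (Nc (Suc j))) = (\<Sum>j\<in>{l..L}. f j)"
    by (simp add: f_def)
  show ?thesis unfolding R L using s1 s2 s3 s4 by linarith
qed


theorem theoremB2:
  fixes X :: "'a set" and d :: "'a \<Rightarrow> 'a \<Rightarrow> real"
    and \<mu> s :: "'a \<Rightarrow> real" and p C q :: real and L :: nat
  assumes "finite_metric_space X d"
    and "card X \<ge> 2"
    and "\<forall>x\<in>X. \<mu> x \<in> {0, 1}"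
    and "\<forall>x\<in>X. 0 < s x \<and> s x \<le> 1"
    and "p \<ge> 1" and "C > 0" and "q > 1"
  shows "measure_pmf.expectation (bernoulli_family X \<mu> s)
           (\<lambda>B. KR X d p C (bernoulli_estimator X \<mu> s B) \<mu>)
         \<le> E_const X d p C q L powr (1 / p) *
           (if C \<le> max (2 * h_fun X d q L L) (min_sep X d)
            then (2 * (\<Sum>x\<in>X. 1 - s x)) powr (1 / p)
            else (\<Sum>x\<in>X. (1 - s x) / s x) powr (1 / (2 * p)))"
proof -
  note F = fms_facts[OF assms(1)]
  have fin: "finite X" by (rule F(1))
  have ne: "X \<noteq> {}" using assms(2) by auto
  have p0: "p > 0" using assms(5) by simp
  have C0: "C \<ge> 0" using assms(6) by simp
  have q: "q > 1" by (rule assms(7))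
  interpret bsetup X \<mu> s using fin assms(3) assms(4) by unfold_locales
  obtain g where gL: "\<forall>x\<in>X. g (Suc L) x = x"
    and nest: "\<forall>k\<le>L. \<forall>x\<in>X. \<forall>y\<in>X. g (Suc k) x = g (Suc k) y \<longrightarrow> g k x = g k y"
    and dg: "\<forall>k\<le>L. \<forall>x\<in>X. \<forall>y\<in>X. g k x = g k y \<longrightarrow> d x y \<le> 2 * h_fun X d q L k"
    and gX: "\<forall>k. \<forall>x\<in>X. g k x \<in> X"
    and cardg: "\<forall>k\<le>L. card (g k ` X) \<le> cover_number X d (q powr (- real k) * diam X d)"
    using tree_maps[OF assms(1) q ne, of L] by blast
  have D0: "diam X d \<ge> 0"
  proof -
    obtain x where "x \<in> X" using ne by blast
    then show ?thesis using diam_ge[OF fin, of x x d] F(2) by simp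
  qed
  define W where "W j = 2 powr (p - 1) * h_fun X d q L j powr p" for j
  define T where "T j B = Tsum X (g j) (D B)" for j B
  define V where "V = (\<Sum>x\<in>X. (1 - s x) / s x)"
  define Nc where "Nc j = card (g j ` X)" for j
  define H where "H k = (if k \<le> L then h_fun X d q L k else 0)" for k
  have V0: "V \<ge> 0" unfolding V_def using s01 by (intro sum_nonneg) (auto intro!: divide_nonneg_pos)
  have T0: "T j B \<ge> 0" for j B unfolding T_def Tsum_def by (intro sum_nonneg) auto
  have W0: "W j \<ge> 0" for j unfolding W_def by simp
  have H0: "\<forall>k. H k \<ge> 0" unfolding H_def using h_nonneg[OF q _ D0] by simp
  have dgH: "\<forall>k\<le>L. \<forall>x\<in>X. \<forall>y\<in>X. g k x = g k y \<longrightarrow> d x y \<le> 2 * H k"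
    using dg unfolding H_def by simp
  have ET: "measure_pmf.expectation P (T j) \<le> sqrt (Nc j) * sqrt V" for j
  proof -
    have "\<forall>x\<in>X. g j x \<in> X" using gX by blast
    from E_Tsum[OF this] show ?thesis unfolding T_def Nc_def V_def by simp
  qed
  have est0: "\<forall>x\<in>X. bernoulli_estimator X \<mu> s B x \<ge> 0" for B
    unfolding bernoulli_estimator_def using s01 by auto
  have mu0: "\<forall>x\<in>X. \<mu> x \<ge> 0" using assms(3) by auto
  have Dfun: "(\<lambda>x. bernoulli_estimator X \<mu> s B x - \<mu> x) = D B" for B
    by (rule ext) (simp add: D_def)
  have plan: "KR X d p C (bernoulli_estimator X \<mu> s B) \<mu> \<le> c powr (1 / p)"
    if l: "l \<le> Suc L" and c: "(\<Sum>j\<in>{l..L}. W j * (T (Suc j) B - T j B)) + C powr p / 2 * T l B \<le> c"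
    for l B c
  proof -
    obtain \<pi> where pi: "\<pi> \<in> subcouplings X (bernoulli_estimator X \<mu> s B) \<mu>"
      and cst: "Dp X d p \<pi> + C powr p * ((mass X (bernoulli_estimator X \<mu> s B) + mass X \<mu>) / 2 - Mp X \<pi>)
     \<le> (\<Sum>j\<in>{l..L}. 2 powr (p - 1) * H j powr p *
          (Tsum X (g (Suc j)) (\<lambda>x. bernoulli_estimator X \<mu> s B x - \<mu> x)
           - Tsum X (g j) (\<lambda>x. bernoulli_estimator X \<mu> s B x - \<mu> x)))
       + C powr p / 2 * Tsum X (g l) (\<lambda>x. bernoulli_estimator X \<mu> s B x - \<mu> x)"
      using plan_levels[OF fin est0[of B] mu0 F(2) F(5) p0 gL nest dgH H0 l, of C] by blast
    have "(\<Sum>j\<in>{l..L}. 2 powr (p - 1) * H j powr p *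
          (Tsum X (g (Suc j)) (\<lambda>x. bernoulli_estimator X \<mu> s B x - \<mu> x)
           - Tsum X (g j) (\<lambda>x. bernoulli_estimator X \<mu> s B x - \<mu> x)))
       = (\<Sum>j\<in>{l..L}. W j * (T (Suc j) B - T j B))"
      unfolding Dfun T_def W_def H_def by (intro sum.cong refl) auto
    with cst c have "Dp X d p \<pi> + C powr p * ((mass X (bernoulli_estimator X \<mu> s B) + mass X \<mu>) / 2 - Mp X \<pi>) \<le> c"
      unfolding Dfun T_def by linarith
    then show ?thesis by (rule KR_le[OF pi fin F(5) C0 p0])
  qed
  have Ekr: "measure_pmf.expectation P (\<lambda>B. KR X d p C (bernoulli_estimator X \<mu> s B) \<mu>) \<le> K powr (1 / p)"
    if le: "\<And>B. KR X d p C (bernoulli_estimator X \<mu> s B) \<mu> \<le> G B powr (1 / p)"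
      and G0: "\<And>B. G B \<ge> 0" and EG: "measure_pmf.expectation P G \<le> K" for G K
  proof -
    have "measure_pmf.expectation P (\<lambda>B. KR X d p C (bernoulli_estimator X \<mu> s B) \<mu>)
       \<le> measure_pmf.expectation P (\<lambda>B. G B powr (1 / p))"
      by (intro Bochner_Integration.integral_mono le) auto
    also have "\<dots> \<le> K powr (1 / p)"
      using assms(5) by (intro E_root[OF G0 EG]) auto
    finally show ?thesis .
  qed
  show ?thesis
  proof (cases "C \<le> max (2 * h_fun X d q L L) (min_sep X d)")
    case True
    define G where "G B = C powr p / 2 * T (Suc L) B" for B
    have TSL: "T (Suc L) B = (\<Sum>x\<in>X. \<bar>D B x\<bar>)" for B
      unfolding T_def using Tsum_id[OF fin gL] by simp
    have le: "KR X d p C (bernoulli_estimator X \<mu> s B) \<mu> \<le> G B powr (1 / p)" for B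
      by (rule plan[of "Suc L"]) (simp_all add: G_def)
    have G0: "G B \<ge> 0" for B unfolding G_def using T0 by simp
    have "measure_pmf.expectation P G = C powr p / 2 * (\<Sum>x\<in>X. measure_pmf.expectation P (\<lambda>B. \<bar>D B x\<bar>))"
      unfolding G_def TSL by (simp add: Bochner_Integration.integral_sum)
    also have "\<dots> \<le> C powr p / 2 * (\<Sum>x\<in>X. 2 * (1 - s x))"
      by (intro mult_left_mono sum_mono E_absD) auto
    finally have EG: "measure_pmf.expectation P G \<le> C powr p / 2 * (2 * (\<Sum>x\<in>X. 1 - s x))"
      by (simp add: sum_distrib_left)
    have "measure_pmf.expectation P (\<lambda>B. KR X d p C (bernoulli_estimator X \<mu> s B) \<mu>)
        \<le> (C powr p / 2 * (2 * (\<Sum>x\<in>X. 1 - s x))) powr (1 / p)"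
      by (rule Ekr[OF le G0 EG])
    also have "\<dots> = (C powr p / 2) powr (1 / p) * (2 * (\<Sum>x\<in>X. 1 - s x)) powr (1 / p)"
      using s01 by (intro powr_mult)
    finally have calc: "measure_pmf.expectation P (\<lambda>B. KR X d p C (bernoulli_estimator X \<mu> s B) \<mu>)
        \<le> (C powr p / 2) powr (1 / p) * (2 * (\<Sum>x\<in>X. 1 - s x)) powr (1 / p)" .
    have Ec: "E_const X d p C q L = C powr p / 2"
      using True by (simp add: E_const_def)
    show ?thesis unfolding Ec if_P[OF True] by (rule calc)
  next
    case False
    have gen: "measure_pmf.expectation P (\<lambda>B. KR X d p C (bernoulli_estimator X \<mu> s B) \<mu>)
        \<le> E' powr (1 / p) * V powr (1 / (2 * p))"
      if l: "l \<le> L" and c0: "c0 \<ge> 0"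
        and pw: "\<And>B. (\<Sum>j\<in>{l..L}. W j * (T (Suc j) B - T j B)) + C powr p / 2 * T l B
                 \<le> (\<Sum>j\<in>{l..L}. W j * T (Suc j) B) + c0 * T l B"
        and KE: "(\<Sum>j\<in>{l..L}. W j * sqrt (Nc (Suc j))) + c0 * sqrt (Nc l) \<le> E'"
      for l c0 E'
    proof -
      define G where "G B = (\<Sum>j\<in>{l..L}. W j * T (Suc j) B) + c0 * T l B" for B
      have le: "KR X d p C (bernoulli_estimator X \<mu> s B) \<mu> \<le> G B powr (1 / p)" for B
      proof (rule plan[of l])
        show "l \<le> Suc L" using l by simp
        show "(\<Sum>j\<in>{l..L}. W j * (T (Suc j) B - T j B)) + C powr p / 2 * T l B \<le> G B"
          unfolding G_def by (rule pw)
      qed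
      have G0: "G B \<ge> 0" for B unfolding G_def using W0 T0 c0
        by (intro add_nonneg_nonneg sum_nonneg mult_nonneg_nonneg) auto
      have "measure_pmf.expectation P G = (\<Sum>j\<in>{l..L}. W j * measure_pmf.expectation P (T (Suc j))) + c0 * measure_pmf.expectation P (T l)"
        unfolding G_def by (simp add: Bochner_Integration.integral_sum)
      also have "\<dots> \<le> (\<Sum>j\<in>{l..L}. W j * (sqrt (Nc (Suc j)) * sqrt V)) + c0 * (sqrt (Nc l) * sqrt V)"
        using ET W0 c0 by (intro add_mono sum_mono mult_left_mono) auto
      also have "\<dots> = ((\<Sum>j\<in>{l..L}. W j * sqrt (Nc (Suc j))) + c0 * sqrt (Nc l)) * sqrt V"
        by (simp add: sum_distrib_right distrib_right mult.assoc)
      also have "\<dots> \<le> E' * sqrt V"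
        using KE V0 by (intro mult_right_mono) auto
      finally have EG: "measure_pmf.expectation P G \<le> E' * sqrt V" .
      have "measure_pmf.expectation P (\<lambda>B. KR X d p C (bernoulli_estimator X \<mu> s B) \<mu>)
          \<le> (E' * sqrt V) powr (1 / p)"
        by (rule Ekr[OF le G0 EG])
      also have "\<dots> = E' powr (1 / p) * sqrt V powr (1 / p)" by (rule powr_mult)
      also have "sqrt V powr (1 / p) = V powr (1 / (2 * p))"
        using V0 by (simp add: powr_half_sqrt[symmetric] powr_powr)
      finally show ?thesis .
    qed
    have splitW: "(\<Sum>j\<in>{l..L}. W j * (T (Suc j) B - T j B))
        = (\<Sum>j\<in>{l..L}. W j * T (Suc j) B) - (\<Sum>j\<in>{l..L}. W j * T j B)" for l B
      by (simp add: sum_subtractf right_diff_distrib)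
    have lowW: "W l * T l B \<le> (\<Sum>j\<in>{l..L}. W j * T j B)" if "l \<le> L" for l B
      using that W0 T0 by (intro member_le_sum) (auto intro: mult_nonneg_nonneg)
    have NcSL: "Nc (Suc L) \<le> card X" unfolding Nc_def using Tsum_id(2)[OF fin gL] by simp
    have Ncj: "\<forall>j. Suc j \<le> L \<longrightarrow> Nc (Suc j) \<le> cover_number X d (q powr (- real (Suc j)) * diam X d)"
      using cardg unfolding Nc_def by blast
    have cmp: "(\<Sum>j\<in>{l..L}. W j * sqrt (Nc (Suc j)))
      \<le> diam X d powr p * 2 powr (p - 1) * (q powr (- real L * p) * sqrt (card X) +
        (q / (q - 1)) powr p * (\<Sum>j\<in>{Suc l..L}. q powr (p - real j * p) *
            sqrt (cover_number X d (q powr (- real j) * diam X d))))" if "l \<le> L" for l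
      using compare_sum[OF q D0 p0 that NcSL Ncj] unfolding W_def by simp
    show ?thesis
    proof (cases "C \<ge> 2 * h_fun X d q L 0")
      case True
      define c0 where "c0 = C powr p / 2 - W 0"
      have c00: "c0 \<ge> 0"
      proof -
        have "(2 * h_fun X d q L 0) powr p \<le> C powr p"
          using True h_nonneg[OF q _ D0, of 0 L] p0 by (intro powr_mono2) auto
        moreover have "(2 * h_fun X d q L 0) powr p = 2 * W 0"
          unfolding W_def using p0 by (simp add: powr_mult powr_diff)
        ultimately show ?thesis unfolding c0_def by simp
      qed
      have pw: "(\<Sum>j\<in>{0..L}. W j * (T (Suc j) B - T j B)) + C powr p / 2 * T 0 B
                 \<le> (\<Sum>j\<in>{0..L}. W j * T (Suc j) B) + c0 * T 0 B" for B
        using splitW[where l=0 and B=B] lowW[where l=0 and B=B] unfolding c0_def by (simp add: algebra_simps)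
      have N0: "cover_number X d (q powr (- real 0) * diam X d) \<le> 1"
      proof -
        obtain x0 where x0: "x0 \<in> X" using ne by blast
        have "cover_number X d (q powr (- real 0) * diam X d) \<le> card {x0}"
          using x0 diam_ge[OF fin _ x0, of _ d] q by (intro cover_le[OF fin]) auto
        then show ?thesis by simp
      qed
      have Nc0: "sqrt (Nc 0) \<le> 1" using cardg N0 unfolding Nc_def
        by (metis (no_types, lifting) le0 le_trans of_nat_le_1_iff real_sqrt_le_1_iff)
      have KE: "(\<Sum>j\<in>{0..L}. W j * sqrt (Nc (Suc j))) + c0 * sqrt (Nc 0) \<le> E_const X d p C q L"
      proof -
        have Ec: "E_const X d p C q L = c0 + A_fun X d q p L 1"
          using False True unfolding c0_def W_def by (simp add: E_const_def)
        have "A_fun X d q p L 1 = diam X d powr p * 2 powr (p - 1) * (q powr (- real L * p) * sqrt (card X) +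
        (q / (q - 1)) powr p * (\<Sum>j\<in>{Suc 0..L}. q powr (p - real j * p) *
            sqrt (cover_number X d (q powr (- real j) * diam X d))))"
          by (simp add: A_fun_def)
        moreover have "c0 * sqrt (Nc 0) \<le> c0" using c00 Nc0 by (simp add: mult_left_le)
        ultimately show ?thesis using cmp[of 0] Ec by simp
      qed
      from gen[OF _ c00 pw KE] show ?thesis using False by (simp add: V_def)
    next
      case True': False
      have hLC: "2 * h_fun X d q L L \<le> C" using False by simp
      define l0 where "l0 = (LEAST k. 2 * h_fun X d q L k \<le> C)"
      have l0C: "2 * h_fun X d q L l0 \<le> C" unfolding l0_def by (rule LeastI[of _ L]) (rule hLC)
      have l0L: "l0 \<le> L" unfolding l0_def by (rule Least_le) (rule hLC)
      have l0pos: "l0 \<ge> 1" using l0C True' by (cases l0) auto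
      have l0C': "C < 2 * h_fun X d q L (l0 - 1)"
      proof -
        have "l0 - 1 < l0" using l0pos by simp
        then have "\<not> 2 * h_fun X d q L (l0 - 1) \<le> C" unfolding l0_def by (rule not_less_Least)
        then show ?thesis by simp
      qed
      have THE: "(THE l. l \<in> {1..L} \<and> 2 * h_fun X d q L l \<le> C \<and> C < 2 * h_fun X d q L (l - 1)) = l0"
      proof (rule the_equality)
        show "l0 \<in> {1..L} \<and> 2 * h_fun X d q L l0 \<le> C \<and> C < 2 * h_fun X d q L (l0 - 1)"
          using l0pos l0L l0C l0C' by simp
      next
        fix l' assume l': "l' \<in> {1..L} \<and> 2 * h_fun X d q L l' \<le> C \<and> C < 2 * h_fun X d q L (l' - 1)"
        have "l0 \<le> l'" unfolding l0_def using l' by (intro Least_le) simp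
        moreover have "\<not> l0 < l'"
        proof
          assume "l0 < l'"
          then have "h_fun X d q L (l' - 1) \<le> h_fun X d q L l0" by (intro h_anti[OF q _ D0]) simp
          then show False using l' l0C by simp
        qed
        ultimately show "l' = l0" by simp
      qed
      have Ec: "E_const X d p C q L = A_fun X d q p L l0"
        using False True' THE by (simp add: E_const_def)
      define c0 where "c0 = C powr p / 2"
      have c00: "c0 \<ge> 0" unfolding c0_def by simp
      have pw: "(\<Sum>j\<in>{l0..L}. W j * (T (Suc j) B - T j B)) + C powr p / 2 * T l0 B
                 \<le> (\<Sum>j\<in>{l0..L}. W j * T (Suc j) B) + c0 * T l0 B" for B
        using splitW[where l=l0 and B=B] lowW[where l=l0 and B=B] l0L mult_nonneg_nonneg[OF W0[of l0] T0[of l0 B]]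
        unfolding c0_def by linarith
      define trm where "trm = q powr (p - real l0 * p) * sqrt (cover_number X d (q powr (- real l0) * diam X d))"
      define Sg where "Sg = (\<Sum>j\<in>{Suc l0..L}. q powr (p - real j * p) *
            sqrt (cover_number X d (q powr (- real j) * diam X d)))"
      have Aeq: "A_fun X d q p L l0 = diam X d powr p * 2 powr (p - 1) * (q powr (- real L * p) * sqrt (card X) +
        (q / (q - 1)) powr p * Sg) + diam X d powr p * 2 powr (p - 1) * (q / (q - 1)) powr p * trm"
      proof -
        have "(\<Sum>j\<in>{l0..L}. q powr (p - real j * p) * sqrt (cover_number X d (q powr (- real j) * diam X d)))
           = trm + Sg"
          unfolding trm_def Sg_def using l0L by (simp add: sum.atLeast_Suc_atMost)
        then show ?thesis unfolding A_fun_def by (simp only: distrib_left mult.assoc)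
      qed
      have cterm: "c0 * sqrt (Nc l0) \<le> diam X d powr p * 2 powr (p - 1) * (q / (q - 1)) powr p * trm"
      proof -
        have h0: "h_fun X d q L (l0 - 1) \<ge> 0" using h_nonneg[OF q _ D0, of "l0 - 1" L] l0L by simp
        have "C powr p \<le> (2 * h_fun X d q L (l0 - 1)) powr p"
          using l0C' C0 p0 by (intro powr_mono2) auto
        also have "\<dots> = 2 * (2 powr (p - 1) * h_fun X d q L (l0 - 1) powr p)"
          by (simp add: powr_mult powr_diff)
        finally have c1: "c0 \<le> 2 powr (p - 1) * h_fun X d q L (l0 - 1) powr p" unfolding c0_def by simp
        have c2: "h_fun X d q L (l0 - 1) powr p \<le> diam X d powr p * (q / (q - 1)) powr p * q powr (p - real l0 * p)"
          using h_pow_bound[OF q D0 _ p0, of "l0 - 1" L] l0L l0pos by simp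
        have c3: "sqrt (Nc l0) \<le> sqrt (cover_number X d (q powr (- real l0) * diam X d))"
          using cardg l0L unfolding Nc_def by simp
        have "c0 * sqrt (Nc l0) \<le> (2 powr (p - 1) * (diam X d powr p * (q / (q - 1)) powr p * q powr (p - real l0 * p)))
             * sqrt (cover_number X d (q powr (- real l0) * diam X d))"
          using c1 c2 c3 c00 by (intro mult_mono order.trans[OF c1] mult_left_mono) auto
        then show ?thesis unfolding trm_def by (simp add: mult_ac)
      qed
      have KE: "(\<Sum>j\<in>{l0..L}. W j * sqrt (Nc (Suc j))) + c0 * sqrt (Nc l0) \<le> E_const X d p C q L"
        using cmp[OF l0L] cterm unfolding Ec Aeq Sg_def by linarith
      from gen[OF l0L c00 pw KE] show ?thesis using False by (simp add: V_def)
    qed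
  qed
qed


end
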